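(* Let $\mathcal{H}_A,\mathcal{H}_B,\mathcal{H}_C$ be finite-dimensional complex Hilbert spaces and let $U=\sum_{j=1}^r Q_j\otimes R_j$ be a matrix on $\mathcal{H}_A\otimes\mathcal{H}_B\otimes\mathcal{H}_C$, where $Q_1,\dots,Q_r$ are linearly independent matrices on $\mathcal{H}_A\otimes\mathcal{H}_B$ and $R_1,\dots,R_r$ are linearly independent matrices on $\mathcal{H}_C$. Suppose that $Q_1,\dots,Q_n$ ($n\le r$) are product matrices, i.e. $Q_j=X_j'\otimes Y_j'$ for some matrices $X_j'$ on $\mathcal{H}_A$ and $Y_j'$ on $\mathcal{H}_B$. Then there exists a decomposition $U=\sum_{i=1}^{\mathrm{sr}(U)}X_i\otimes Y_i\otimes Z_i$ with exactly $\mathrm{sr}(U)$ terms such that $X_j\otimes Y_j=Q_j$ for $j=1,\dots,n$.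
   Context: For a matrix $U$ on a tensor product $\mathcal{H}_1\otimes\cdots\otimes\mathcal{H}_m$ of finite-dimensional complex Hilbert spaces, its Schmidt rank $\mathrm{sr}(U)$ is the least integer $r$ such that $U=\sum_{j=1}^r A_{j,1}\otimes\cdots\otimes A_{j,m}$ with each $A_{j,i}$ a matrix on $\mathcal{H}_i$ (i.e. the tensor rank of $U$). *)

theory Defs
  imports Main "HOL.Complex"
begin

text \<open>A matrix on a finite-dimensional complex Hilbert space with orthonormal basis indexed
by the finite type 'i is a function 'i => 'i => complex (entries).\<close>

definition tens :: "('i \<Rightarrow> 'i \<Rightarrow> complex) \<Rightarrow> ('j \<Rightarrow> 'j \<Rightarrow> complex)
                     \<Rightarrow> ('i \<times> 'j \<Rightarrow> 'i \<times> 'j \<Rightarrow> complex)" where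
  "tens X Y = (\<lambda>(i1, i2) (j1, j2). X i1 j1 * Y i2 j2)"

definition lin_indep :: "nat \<Rightarrow> (nat \<Rightarrow> 'i \<Rightarrow> 'i \<Rightarrow> complex) \<Rightarrow> bool" where
  "lin_indep r M \<longleftrightarrow>
     (\<forall>c :: nat \<Rightarrow> complex. (\<lambda>i j. \<Sum>k<r. c k * M k i j) = (\<lambda>i j. 0) \<longrightarrow> (\<forall>k<r. c k = 0))"

definition schmidt_rank3 :: "(('a \<times> 'b) \<times> 'c \<Rightarrow> ('a \<times> 'b) \<times> 'c \<Rightarrow> complex) \<Rightarrow> nat" where
  "schmidt_rank3 U = (LEAST r. \<exists>(X :: nat \<Rightarrow> 'a \<Rightarrow> 'a \<Rightarrow> complex)
        (Y :: nat \<Rightarrow> 'b \<Rightarrow> 'b \<Rightarrow> complex) (Z :: nat \<Rightarrow> 'c \<Rightarrow> 'c \<Rightarrow> complex).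
        U = (\<lambda>i j. \<Sum>k<r. tens (tens (X k) (Y k)) (Z k) i j))"

end

theory Submission
  imports Defs "HOL-Library.Function_Algebras"
begin

definition msc :: "complex \<Rightarrow> ('i \<Rightarrow> 'j \<Rightarrow> complex) \<Rightarrow> ('i \<Rightarrow> 'j \<Rightarrow> complex)" where
  "msc a M = (\<lambda>i j. a * M i j)"

lemma sum_app: "(sum f A) x = sum (\<lambda>k. f k x) A"
  by (induction A rule: infinite_finite_induct) auto

interpretation mvs: vector_space "msc :: complex \<Rightarrow> ('i \<Rightarrow> 'j \<Rightarrow> complex) \<Rightarrow> _"
  by unfold_locales (auto simp: msc_def fun_eq_iff algebra_simps)

interpretation cvs: vector_space "(*) :: complex \<Rightarrow> complex \<Rightarrow> complex"
  by unfold_locales (auto simp: algebra_simps)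

interpretation mvp: vector_space_pair "msc :: complex \<Rightarrow> ('i \<Rightarrow> 'j \<Rightarrow> complex) \<Rightarrow> _" "(*) :: complex \<Rightarrow> complex \<Rightarrow> complex"
  by unfold_locales

lemma tens_pair[simp]: "tens P Z (x, c) (y, c') = P x y * Z c c'"
  by (simp add: tens_def)

lemma lin_indep_mono: "lin_indep r M \<Longrightarrow> n \<le> r \<Longrightarrow> lin_indep n M"
  unfolding lin_indep_def
proof (intro allI impI)
  fix c :: "nat \<Rightarrow> complex" and k
  assume H: "\<forall>c. (\<lambda>i j. \<Sum>k<r. c k * M k i j) = (\<lambda>i j. 0) \<longrightarrow> (\<forall>k<r. c k = 0)"
    and nr: "n \<le> r" and s: "(\<lambda>i j. \<Sum>k<n. c k * M k i j) = (\<lambda>i j. 0)" and kn: "k < n"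
  let ?c = "\<lambda>k. if k < n then c k else 0"
  have eqc: "(\<lambda>i j. \<Sum>k<r. ?c k * M k i j) = (\<lambda>i j. \<Sum>k<n. c k * M k i j)"
  proof (intro ext)
    fix i j
    have "(\<Sum>k<r. ?c k * M k i j) = (\<Sum>k\<in>{..<n}. ?c k * M k i j)"
      by (rule sum.mono_neutral_right) (use nr in auto)
    then show "(\<Sum>k<r. ?c k * M k i j) = (\<Sum>k<n. c k * M k i j)" by simp
  qed
  have "?c k = 0" using H[rule_format, OF eqc[unfolded s], of k] kn nr by simp
  with kn show "c k = 0" by simp
qed

lemma lin_indep_indep:
  assumes "lin_indep n M"
  shows "inj_on M {..<n}" "mvs.independent (M ` {..<n})"
proof -
  show inj: "inj_on M {..<n}"
  proof (rule inj_onI, rule ccontr)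
    fix k l assume k: "k \<in> {..<n}" and l: "l \<in> {..<n}" and e: "M k = M l" and kl: "k \<noteq> l"
    let ?c = "\<lambda>m. if m = k then 1 else if m = l then -1 else (0::complex)"
    have zero: "(\<lambda>i j. \<Sum>m<n. ?c m * M m i j) = (\<lambda>i j. 0)"
    proof (intro ext)
      fix i j
      have "(\<Sum>m<n. ?c m * M m i j) = (\<Sum>m<n. (if m = k then M k i j else 0) - (if m = l then M l i j else 0))"
        by (rule sum.cong) (use kl in auto)
      also have "\<dots> = 0" using k l e by (simp add: sum_subtractf)
      finally show "(\<Sum>m<n. ?c m * M m i j) = 0" .
    qed
    have H: "\<forall>c. (\<lambda>i j. \<Sum>k<n. c k * M k i j) = (\<lambda>i j. 0) \<longrightarrow> (\<forall>k<n. c k = 0)"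
      using assms unfolding lin_indep_def .
    have "?c k = 0" using H[rule_format, OF zero, of k] k by simp
    then show False by simp
  qed
  show "mvs.independent (M ` {..<n})"
  proof (rule mvs.independent_if_scalars_zero)
    show "finite (M ` {..<n})" by simp
    fix f x assume s: "(\<Sum>x\<in>M ` {..<n}. msc (f x) x) = 0" and x: "x \<in> M ` {..<n}"
    have "(\<Sum>k<n. msc (f (M k)) (M k)) = 0" using s by (simp add: sum.reindex[OF inj])
    then have eqz: "(\<lambda>i j. \<Sum>k<n. f (M k) * M k i j) = (\<lambda>i j. 0)"
      by (auto simp: fun_eq_iff sum_app msc_def)
    have "\<forall>k<n. f (M k) = 0"
      using assms[unfolded lin_indep_def, rule_format, OF eqz] by blast
    with x show "f x = 0" by auto
  qed
qed

lemma decomp_exists: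
  fixes U :: "('a::finite \<times> 'b::finite) \<times> 'c::finite \<Rightarrow> ('a \<times> 'b) \<times> 'c \<Rightarrow> complex"
  shows "\<exists>N (X :: nat \<Rightarrow> 'a \<Rightarrow> 'a \<Rightarrow> complex) (Y :: nat \<Rightarrow> 'b \<Rightarrow> 'b \<Rightarrow> complex)
        (Z :: nat \<Rightarrow> 'c \<Rightarrow> 'c \<Rightarrow> complex).
        U = (\<lambda>i j. \<Sum>k<N. tens (tens (X k) (Y k)) (Z k) i j)"
proof -
  let ?E = "UNIV :: ((('a \<times> 'b) \<times> 'c) \<times> (('a \<times> 'b) \<times> 'c)) set"
  obtain h where h: "bij_betw h {0..<card ?E} ?E" using ex_bij_betw_nat_finite[of ?E] by auto
  define X where "X k = (\<lambda>x y. if x = fst (fst (fst (h k))) \<and> y = fst (fst (snd (h k))) then U (fst (h k)) (snd (h k)) else 0)" for k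
  define Y where "Y k = (\<lambda>x y. if x = snd (fst (fst (h k))) \<and> y = snd (fst (snd (h k))) then 1 else (0::complex))" for k
  define Z where "Z k = (\<lambda>x y. if x = snd (fst (h k)) \<and> y = snd (snd (h k)) then 1 else (0::complex))" for k
  have T: "tens (tens (X k) (Y k)) (Z k) i j = (if (i, j) = h k then U i j else 0)" for k i j
  proof -
    obtain a b c where i: "i = ((a,b),c)" by (metis prod.exhaust)
    obtain a' b' c' where j: "j = ((a',b'),c')" by (metis prod.exhaust)
    obtain p1 p2 p3 q1 q2 q3 where hk: "h k = (((p1,p2),p3),((q1,q2),q3))" by (metis prod.exhaust)
    show ?thesis by (simp add: i j hk X_def Y_def Z_def)
  qed
  have "U = (\<lambda>i j. \<Sum>k<card ?E. tens (tens (X k) (Y k)) (Z k) i j)"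
  proof (intro ext)
    fix i j
    have "(\<Sum>k<card ?E. tens (tens (X k) (Y k)) (Z k) i j) = (\<Sum>k\<in>{0..<card ?E}. (\<lambda>e. if (i, j) = e then U i j else 0) (h k))"
      by (simp add: T atLeast0LessThan)
    also have "\<dots> = (\<Sum>e\<in>?E. if (i, j) = e then U i j else 0)"
      by (rule sum.reindex_bij_betw[OF h])
    also have "\<dots> = U i j" by simp
    finally show "U i j = (\<Sum>k<card ?E. tens (tens (X k) (Y k)) (Z k) i j)" by simp
  qed
  then show ?thesis by blast
qed

lemma tens_zero: "tens M (\<lambda>_ _. 0) = 0"
  by (auto simp: tens_def fun_eq_iff split: prod.splits)

lemma fun_sum2: "(\<lambda>i j. \<Sum>k\<in>K. G k i j) = (\<Sum>k\<in>K. G k)"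
  by (simp add: fun_eq_iff sum_app)

theorem corollary2:
  fixes Q :: "nat \<Rightarrow> ('a::finite \<times> 'b::finite) \<Rightarrow> ('a \<times> 'b) \<Rightarrow> complex"
    and R :: "nat \<Rightarrow> 'c::finite \<Rightarrow> 'c \<Rightarrow> complex"
    and U :: "('a \<times> 'b) \<times> 'c \<Rightarrow> ('a \<times> 'b) \<times> 'c \<Rightarrow> complex"
    and X' :: "nat \<Rightarrow> 'a \<Rightarrow> 'a \<Rightarrow> complex"
    and Y' :: "nat \<Rightarrow> 'b \<Rightarrow> 'b \<Rightarrow> complex"
    and r n :: nat
  assumes "U = (\<lambda>i j. \<Sum>k<r. tens (Q k) (R k) i j)"
    and "lin_indep r Q"
    and "lin_indep r R"
    and "n \<le> r"
    and "\<forall>j<n. Q j = tens (X' j) (Y' j)"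
  shows "\<exists>(X :: nat \<Rightarrow> 'a \<Rightarrow> 'a \<Rightarrow> complex) (Y :: nat \<Rightarrow> 'b \<Rightarrow> 'b \<Rightarrow> complex)
            (Z :: nat \<Rightarrow> 'c \<Rightarrow> 'c \<Rightarrow> complex).
           U = (\<lambda>i j. \<Sum>k<schmidt_rank3 U. tens (tens (X k) (Y k)) (Z k) i j)
         \<and> (\<forall>j<n. tens (X j) (Y j) = Q j)"
proof -
  define s where "s = schmidt_rank3 U"
  have "\<exists>(X :: nat \<Rightarrow> 'a \<Rightarrow> 'a \<Rightarrow> complex) (Y :: nat \<Rightarrow> 'b \<Rightarrow> 'b \<Rightarrow> complex)
        (Z :: nat \<Rightarrow> 'c \<Rightarrow> 'c \<Rightarrow> complex). U = (\<lambda>i j. \<Sum>k<s. tens (tens (X k) (Y k)) (Z k) i j)"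
    unfolding s_def schmidt_rank3_def by (rule LeastI_ex) (rule decomp_exists)
  then obtain A Bm C where dec: "U = (\<lambda>i j. \<Sum>k<s. tens (tens (A k) (Bm k)) (C k) i j)" by blast
  define P where "P k = tens (A k) (Bm k)" for k
  define T where "T = P ` {..<s}"
  define S where "S = Q ` {..<n}"
  have injR: "inj_on R {..<r}" by (rule lin_indep_indep(1)[OF assms(3)])
  have indR: "mvs.independent (R`{..<r})" by (rule lin_indep_indep(2)[OF assms(3)])
  have QnI: "lin_indep n Q" by (rule lin_indep_mono[OF assms(2) assms(4)])
  have injQ: "inj_on Q {..<n}" by (rule lin_indep_indep(1)[OF QnI])
  have indS: "mvs.independent S" unfolding S_def by (rule lin_indep_indep(2)[OF QnI])
  have QspanT: "Q l \<in> mvs.span T" if l: "l < r" for l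
  proof -
    obtain g where g: "Vector_Spaces.linear msc (*) g"
      and gR: "\<forall>x\<in>R`{..<r}. g x = (if x = R l then 1 else 0)"
      using mvp.linear_independent_extend[OF indR, of "\<lambda>x. if x = R l then 1 else 0"] by blast
    have gRk: "g (R k) = (if k = l then 1 else 0)" if "k<r" for k
    proof -
      have "(R k = R l) = (k = l)" using inj_on_eq_iff[OF injR] that l by simp
      then show ?thesis using gR that by auto
    qed
    have "Q l x y = (\<Sum>k<s. g (C k) * P k x y)" for x y
    proof -
      have sl1: "(\<lambda>c c'. U (x,c) (y,c')) = (\<Sum>k<r. msc (Q k x y) (R k))"
        by (simp add: assms(1) fun_eq_iff sum_app msc_def)
      have sl2: "(\<lambda>c c'. U (x,c) (y,c')) = (\<Sum>k<s. msc (P k x y) (C k))"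
        by (simp add: dec P_def fun_eq_iff sum_app msc_def)
      have "Q l x y = (\<Sum>k<r. Q k x y * (if k = l then 1 else 0))"
        using l by (simp add: if_distrib cong: if_cong)
      also have "\<dots> = (\<Sum>k<r. Q k x y * g (R k))"
        by (rule sum.cong) (auto simp: gRk)
      also have "\<dots> = g (\<lambda>c c'. U (x,c) (y,c'))"
        by (simp add: sl1 mvp.linear_sum[OF g] mvp.linear_scale[OF g])
      also have "\<dots> = (\<Sum>k<s. P k x y * g (C k))"
        by (simp add: sl2 mvp.linear_sum[OF g] mvp.linear_scale[OF g])
      finally show ?thesis by (simp add: mult.commute)
    qed
    hence eq: "Q l = (\<Sum>k<s. msc (g (C k)) (P k))" by (simp add: fun_eq_iff sum_app msc_def)
    have "(\<Sum>k<s. msc (g (C k)) (P k)) \<in> mvs.span T"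
      by (intro mvs.span_sum mvs.span_scale mvs.span_base) (auto simp: T_def)
    then show ?thesis using eq by simp
  qed
  have SsubT: "S \<subseteq> mvs.span T"
  proof
    fix v assume "v \<in> S"
    then obtain l where l: "l < n" "v = Q l" by (auto simp: S_def)
    then have "l < r" using assms(4) by linarith
    then show "v \<in> mvs.span T" using QspanT l(2) by blast
  qed
  obtain Bs where Bs: "S \<subseteq> Bs" "Bs \<subseteq> S \<union> T" "mvs.independent Bs" "S \<union> T \<subseteq> mvs.span Bs"
    by (rule mvs.maximal_independent_subset_extend[of S "S \<union> T"]) (simp_all add: indS)
  have BsT: "Bs \<subseteq> mvs.span T" using Bs(2) SsubT mvs.span_superset[of T] by blast
  have fT: "finite T" by (simp add: T_def)
  have finB: "finite Bs" and cardB: "card Bs \<le> card T"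
    using mvs.independent_span_bound[OF fT Bs(3) BsT] by simp_all
  have cardT: "card T \<le> s" unfolding T_def using card_image_le[of "{..<s}" P] by simp
  have cardS: "card S = n" using injQ by (simp add: S_def card_image)
  define m where "m = card (Bs - S)"
  have nm: "n + m = card Bs"
    using Bs(1) finB cardS card_Diff_subset[of S Bs] card_mono[of Bs S] unfolding m_def
    by (simp add: S_def)
  have nms: "n + m \<le> s" using nm cardB cardT by simp
  obtain e where e: "bij_betw e {0..<m} (Bs - S)"
    using ex_bij_betw_nat_finite[of "Bs - S"] finB unfolding m_def by auto
  have ex: "\<forall>k. \<exists>w. k < s \<longrightarrow> P k = (\<Sum>v\<in>Bs. msc (w v) v)"
  proof
    fix k
    show "\<exists>w. k < s \<longrightarrow> P k = (\<Sum>v\<in>Bs. msc (w v) v)"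
    proof (cases "k < s")
      case True
      then have "P k \<in> mvs.span Bs" using Bs(4) by (auto simp: T_def)
      then have "P k \<in> range (\<lambda>w. \<Sum>v\<in>Bs. msc (w v) v)" by (simp only: mvs.span_finite[OF finB])
      then show ?thesis by (elim rangeE) blast
    qed simp
  qed
  obtain u where u0: "\<forall>k. k < s \<longrightarrow> P k = (\<Sum>v\<in>Bs. msc (u k v) v)"
    using choice[OF ex] by blast
  have u: "P k = (\<Sum>v\<in>Bs. msc (u k v) v)" if "k < s" for k using u0 that by blast
  define D where "D v = (\<Sum>k<s. msc (u k v) (C k))" for v
  define F where "F v = tens v (D v)" for v
  have UF: "U = (\<Sum>v\<in>Bs. F v)"
  proof (intro ext)
    fix i j :: "('a \<times> 'b) \<times> 'c"
    obtain x c where i: "i = (x,c)" by (metis prod.exhaust)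
    obtain y c' where j: "j = (y,c')" by (metis prod.exhaust)
    have "U i j = (\<Sum>k<s. P k x y * C k c c')" by (simp add: dec i j P_def)
    also have "\<dots> = (\<Sum>k<s. (\<Sum>v\<in>Bs. u k v * v x y) * C k c c')"
    proof (rule sum.cong)
      fix k assume "k \<in> {..<s}"
      then show "P k x y * C k c c' = (\<Sum>v\<in>Bs. u k v * v x y) * C k c c'"
        using u[of k] by (simp add: sum_app msc_def)
    qed simp
    also have "\<dots> = (\<Sum>k<s. \<Sum>v\<in>Bs. v x y * (u k v * C k c c'))"
      unfolding sum_distrib_right
      by (intro sum.cong refl) (simp only: mult.commute mult.left_commute)
    also have "\<dots> = (\<Sum>v\<in>Bs. \<Sum>k<s. v x y * (u k v * C k c c'))"
      by (rule sum.swap)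
    also have "\<dots> = (\<Sum>v\<in>Bs. v x y * D v c c')"
      by (simp add: D_def sum_app msc_def sum_distrib_left)
    also have "\<dots> = (\<Sum>v\<in>Bs. F v) i j" by (simp add: F_def i j sum_app)
    finally show "U i j = (\<Sum>v\<in>Bs. F v) i j" .
  qed
  define ind where "ind v = inv_into {..<s} P v" for v
  define X where "X k = (if k < n then X' k else if k < n + m then A (ind (e (k - n))) else (\<lambda>_ _. 0))" for k
  define Y where "Y k = (if k < n then Y' k else if k < n + m then Bm (ind (e (k - n))) else (\<lambda>_ _. 0))" for k
  define Z where "Z k = (if k < n then D (Q k) else if k < n + m then D (e (k - n)) else (\<lambda>_ _. 0))" for k
  define G where "G k = tens (tens (X k) (Y k)) (Z k)" for k
  have t1: "G k = F (Q k)" if "k < n" for k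
    using that assms(5) by (simp add: G_def X_def Y_def Z_def F_def)
  have t2: "G k = F (e (k - n))" if "n \<le> k" "k < n + m" for k
  proof -
    have "e (k - n) \<in> Bs - S" using e that by (auto simp: bij_betw_def)
    then have "e (k - n) \<in> P ` {..<s}" using Bs(2) by (auto simp: T_def)
    then have "P (ind (e (k - n))) = e (k - n)" by (simp add: ind_def f_inv_into_f)
    then show ?thesis using that by (simp add: G_def X_def Y_def Z_def F_def P_def)
  qed
  have t3: "G k = 0" if "n + m \<le> k" for k
    using that by (simp add: G_def X_def Y_def Z_def tens_zero)
  have "(\<Sum>k<s. G k) = (\<Sum>k\<in>{0..<n}. G k) + (\<Sum>k\<in>{n..<n+m}. G k) + (\<Sum>k\<in>{n+m..<s}. G k)"
    using nms by (simp add: lessThan_atLeast0 sum.atLeastLessThan_concat)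
  also have "(\<Sum>k\<in>{0..<n}. G k) = (\<Sum>v\<in>S. F v)"
    using t1 by (simp add: S_def sum.reindex[OF injQ] atLeast0LessThan)
  also have "(\<Sum>k\<in>{n..<n+m}. G k) = (\<Sum>k\<in>{n..<n+m}. F (e (k - n)))"
    using t2 by simp
  also have "\<dots> = (\<Sum>k\<in>{0..<m}. F (e k))"
    using sum.shift_bounds_nat_ivl[of "\<lambda>k. F (e (k - n))" 0 n m] by (simp add: add.commute)
  also have "\<dots> = (\<Sum>v\<in>Bs - S. F v)" by (rule sum.reindex_bij_betw[OF e])
  also have "(\<Sum>k\<in>{n+m..<s}. G k) = 0" using t3 by simp
  finally have "(\<Sum>k<s. G k) = (\<Sum>v\<in>Bs. F v)"
    using sum.subset_diff[OF Bs(1) finB, of F] by (simp add: add.commute fun_eq_iff)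
  then have "U = (\<lambda>i j. \<Sum>k<s. tens (tens (X k) (Y k)) (Z k) i j)"
    using UF by (simp add: fun_sum2 G_def)
  moreover have "\<forall>j<n. tens (X j) (Y j) = Q j" using assms(5) by (simp add: X_def Y_def)
  ultimately show ?thesis unfolding s_def by blast
qed

end
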